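(* Let $\mathfrak{A}$ be a $\sigma$-algebra (abstract, i.e. a $\sigma$-complete Boolean algebra) and let $\mathcal{S}_b(\mathbb{C},\mathfrak{A})$ be the set of all bounded complex spectral families in $\mathfrak{A}$. Then the map $f_\ast:\mathcal{S}_b(\mathbb{C},\mathfrak{A})\to C(\mathcal{Q}(\mathfrak{A}))$, $E\mapsto f_E$, is a bijection; consequently $\mathcal{S}_b(\mathbb{C},\mathfrak{A})$, equipped with the operations transported by $f_\ast$ (i.e. $E+F:=f_\ast^{-1}(f_E+f_F)$, $EF:=f_\ast^{-1}(f_Ef_F)$, $\alpha E:=f_\ast^{-1}(\alpha f_E)$, $E^\ast:=f_\ast^{-1}(\overline{f_E})$, $|E|:=\|f_E\|_\infty$), is an abelian $C^\ast$-algebra $\ast$-isomorphic to $C(\mathcal{Q}(\mathfrak{A}))$.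
   Context: Infima/suprema over real index sets in $\mathfrak{A}$ are computed along countable dense sets. A complex spectral family in $\mathfrak{A}$ is a map $E:\mathbb{R}^2\to\mathfrak{A}$ with (i) $E_{\lambda_1,\lambda_2}\wedge E_{\mu_1,\mu_2}=E_{\min\{\lambda_1,\mu_1\},\min\{\lambda_2,\mu_2\}}$; (ii) $\bigwedge_{\lambda_1<\mu_1,\lambda_2<\mu_2}E_{\mu_1,\mu_2}=E_{\lambda_1,\lambda_2}$; (iii) $\bigwedge_\lambda E_{\lambda,\lambda_2}=0=\bigwedge_\lambda E_{\lambda_1,\lambda}$ and $\bigvee_{\lambda_1,\lambda_2}E_{\lambda_1,\lambda_2}=1$; bounded means there are $m,b$ with $E=0$ whenever some coordinate is $\le m$ and $E=1$ when both coordinates are $\ge b$. The Stone spectrum $\mathcal{Q}(\mathfrak{A})$ is the set of maximal dual ideals (maximal nonempty upward closed subsets not containing $0$, closed under finite meets) with the topology generated by $\{\mathfrak{B}\mid a\in\mathfrak{B}\}$, $a\in\mathfrak{A}$. For such $E$, $f_E=f_{E,1}+if_{E,2}$ where $f_{E,1}(\mathfrak{B})=\inf\{\lambda\mid\exists\mu:E_{\lambda,\mu}\in\mathfrak{B}\}$ and $f_{E,2}(\mathfrak{B})=\inf\{\mu\mid\exists\lambda:E_{\lambda,\mu}\in\mathfrak{B}\}$. *)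

theory Defs
  imports "HOL-Analysis.Analysis"
begin

text \<open>Abstract sigma-algebra: a Boolean algebra in which every countable subset has a
  greatest lower bound (hence, by complementation, also a least upper bound).\<close>

definition is_glb :: "'a::boolean_algebra \<Rightarrow> 'a set \<Rightarrow> bool" where
  "is_glb x S \<longleftrightarrow> (\<forall>s\<in>S. x \<le> s) \<and> (\<forall>y. (\<forall>s\<in>S. y \<le> s) \<longrightarrow> y \<le> x)"

definition is_lub :: "'a::boolean_algebra \<Rightarrow> 'a set \<Rightarrow> bool" where
  "is_lub x S \<longleftrightarrow> (\<forall>s\<in>S. s \<le> x) \<and> (\<forall>y. (\<forall>s\<in>S. s \<le> y) \<longrightarrow> x \<le> y)"

definition sigma_complete :: "'a::boolean_algebra itself \<Rightarrow> bool" where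
  "sigma_complete _ \<longleftrightarrow> (\<forall>S::'a set. countable S \<longrightarrow> (\<exists>x. is_glb x S))"

text \<open>Complex spectral family; infima/suprema over real index sets are taken along
  the countable dense set of rationals.\<close>

definition complex_spectral_family :: "(real \<Rightarrow> real \<Rightarrow> 'a::boolean_algebra) \<Rightarrow> bool" where
  "complex_spectral_family E \<longleftrightarrow>
     (\<forall>l1 l2 m1 m2. inf (E l1 l2) (E m1 m2) = E (min l1 m1) (min l2 m2)) \<and>
     (\<forall>l1 l2. is_glb (E l1 l2)
        {E m1 m2 | m1 m2. m1 \<in> \<rat> \<and> m2 \<in> \<rat> \<and> l1 < m1 \<and> l2 < m2}) \<and>
     (\<forall>l2. is_glb bot {E l l2 | l. l \<in> \<rat>}) \<and>
     (\<forall>l1. is_glb bot {E l1 l | l. l \<in> \<rat>}) \<and>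
     is_lub top {E l1 l2 | l1 l2. l1 \<in> \<rat> \<and> l2 \<in> \<rat>}"

definition bounded_csf :: "(real \<Rightarrow> real \<Rightarrow> 'a::boolean_algebra) \<Rightarrow> bool" where
  "bounded_csf E \<longleftrightarrow> complex_spectral_family E \<and>
     (\<exists>m b. (\<forall>l1 l2. (l1 \<le> m \<or> l2 \<le> m) \<longrightarrow> E l1 l2 = bot) \<and>
            (\<forall>l1 l2. (b \<le> l1 \<and> b \<le> l2) \<longrightarrow> E l1 l2 = top))"

definition S_b :: "(real \<Rightarrow> real \<Rightarrow> 'a::boolean_algebra) set" where
  "S_b = {E. bounded_csf E}"

definition dual_ideal :: "'a::boolean_algebra set \<Rightarrow> bool" where
  "dual_ideal B \<longleftrightarrow> B \<noteq> {} \<and> bot \<notin> B \<and>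
     (\<forall>a b. a \<in> B \<and> a \<le> b \<longrightarrow> b \<in> B) \<and>
     (\<forall>a b. a \<in> B \<and> b \<in> B \<longrightarrow> inf a b \<in> B)"

definition stone_spectrum :: "'a::boolean_algebra set set" where
  "stone_spectrum = {B. dual_ideal B \<and> (\<forall>C. dual_ideal C \<and> B \<subseteq> C \<longrightarrow> C = B)}"

definition stone_topology :: "'a::boolean_algebra set topology" where
  "stone_topology = topology_generated_by {{B \<in> stone_spectrum. a \<in> B} | a. True}"

definition C_Q :: "('a::boolean_algebra set \<Rightarrow> complex) set" where
  "C_Q = {f. continuous_map stone_topology euclidean f \<and>
             (\<forall>B. B \<notin> stone_spectrum \<longrightarrow> f B = 0)}"

definition f_E1 :: "(real \<Rightarrow> real \<Rightarrow> 'a::boolean_algebra) \<Rightarrow> 'a set \<Rightarrow> real" where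
  "f_E1 E B = Inf {l. \<exists>m. E l m \<in> B}"

definition f_E2 :: "(real \<Rightarrow> real \<Rightarrow> 'a::boolean_algebra) \<Rightarrow> 'a set \<Rightarrow> real" where
  "f_E2 E B = Inf {m. \<exists>l. E l m \<in> B}"

definition f_E :: "(real \<Rightarrow> real \<Rightarrow> 'a::boolean_algebra) \<Rightarrow> 'a set \<Rightarrow> complex" where
  "f_E E B = (if B \<in> stone_spectrum
              then Complex (f_E1 E B) (f_E2 E B) else 0)"

end

theory Submission
  imports Defs
begin

abbreviation QQ :: "'a::boolean_algebra \<Rightarrow> 'a set set" where
  "QQ a \<equiv> {B \<in> stone_spectrum. a \<in> B}"

lemma ultra_ext:
  fixes F :: "'a::boolean_algebra set"
  assumes "dual_ideal F"
  shows "\<exists>B\<in>stone_spectrum. F \<subseteq> B"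
proof -
  let ?A = "{C. dual_ideal C \<and> F \<subseteq> C}"
  have "\<exists>M\<in>?A. \<forall>X\<in>?A. M \<subseteq> X \<longrightarrow> X = M"
  proof (rule subset_Zorn_nonempty)
    show "?A \<noteq> {}" using assms by blast
    fix \<C> assume ne: "\<C> \<noteq> {}" and ch: "subset.chain ?A \<C>"
    from ch have sub: "\<C> \<subseteq> ?A" and tot: "\<forall>x\<in>\<C>. \<forall>y\<in>\<C>. x \<subseteq> y \<or> y \<subseteq> x"
      unfolding subset.chain_def by blast+
    have "dual_ideal (\<Union>\<C>)"
      unfolding dual_ideal_def
    proof (intro conjI allI impI)
      show "\<Union>\<C> \<noteq> {}" using ne sub unfolding dual_ideal_def by blast
      show "bot \<notin> \<Union>\<C>" using sub unfolding dual_ideal_def by blast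
      show "b \<in> \<Union>\<C>" if "a \<in> \<Union>\<C> \<and> a \<le> b" for a b
        using that sub unfolding dual_ideal_def by blast
      show "inf a b \<in> \<Union>\<C>" if "a \<in> \<Union>\<C> \<and> b \<in> \<Union>\<C>" for a b
      proof -
        from that obtain C1 C2 where c: "C1 \<in> \<C>" "C2 \<in> \<C>" "a \<in> C1" "b \<in> C2" by auto
        from tot c have "C1 \<subseteq> C2 \<or> C2 \<subseteq> C1" by auto
        then show ?thesis using c sub unfolding dual_ideal_def by blast
      qed
    qed
    moreover have "F \<subseteq> \<Union>\<C>" using ne sub by auto
    ultimately show "\<Union>\<C> \<in> ?A" by simp
  qed
  then obtain M where M: "dual_ideal M" "F \<subseteq> M" "\<forall>X. dual_ideal X \<and> F \<subseteq> X \<longrightarrow> M \<subseteq> X \<longrightarrow> X = M"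
    by auto
  have "M \<in> stone_spectrum" unfolding stone_spectrum_def using M by blast
  with M show ?thesis by blast
qed

lemma dual_ideal_top: "dual_ideal B \<Longrightarrow> top \<in> B"
  unfolding dual_ideal_def by auto

lemma dual_ideal_up: "dual_ideal B \<Longrightarrow> a \<in> B \<Longrightarrow> a \<le> b \<Longrightarrow> b \<in> B"
  unfolding dual_ideal_def by auto

lemma dual_ideal_inf: "dual_ideal B \<Longrightarrow> inf a b \<in> B \<longleftrightarrow> a \<in> B \<and> b \<in> B"
  unfolding dual_ideal_def by (metis inf.cobounded1 inf.cobounded2)

lemma dual_ideal_bot: "dual_ideal B \<Longrightarrow> bot \<notin> B"
  unfolding dual_ideal_def by auto

lemma spec_dual: "B \<in> stone_spectrum \<Longrightarrow> dual_ideal B"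
  unfolding stone_spectrum_def by auto

lemma spec_compl:
  fixes a :: "'a::boolean_algebra"
  assumes B: "B \<in> stone_spectrum"
  shows "- a \<in> B \<longleftrightarrow> a \<notin> B"
proof
  assume "- a \<in> B"
  then show "a \<notin> B" using B dual_ideal_inf[OF spec_dual[OF B], of a "- a"] dual_ideal_bot[OF spec_dual[OF B]]
    by auto
next
  assume na: "a \<notin> B"
  have dB: "dual_ideal B" using B by (rule spec_dual)
  let ?C = "{x. \<exists>b\<in>B. inf b a \<le> x}"
  show "- a \<in> B"
  proof (cases "bot \<in> ?C")
    case True
    then obtain b where b: "b \<in> B" "inf b a \<le> bot" by auto
    then have "b \<le> - a" by (metis bot_unique inf_shunt)
    then show ?thesis using dB b dual_ideal_up by blast
  next
    case False
    have "dual_ideal ?C"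
      unfolding dual_ideal_def
    proof (intro conjI allI impI)
      show "?C \<noteq> {}" using dual_ideal_top[OF dB] by auto
      show "bot \<notin> ?C" using False .
      show "y \<in> ?C" if "x \<in> ?C \<and> x \<le> y" for x y using that order_trans by blast
      show "inf x y \<in> ?C" if "x \<in> ?C \<and> y \<in> ?C" for x y
      proof -
        from that obtain b1 b2 where "b1 \<in> B" "b2 \<in> B" "inf b1 a \<le> x" "inf b2 a \<le> y" by auto
        then have "inf b1 b2 \<in> B" "inf (inf b1 b2) a \<le> inf x y"
          using dB dual_ideal_inf apply blast
          by (meson \<open>inf b1 a \<le> x\<close> \<open>inf b2 a \<le> y\<close> inf.cobounded1 inf.cobounded2 inf_mono le_inf_iff order_trans)
        then show ?thesis by blast
      qed
    qed
    moreover have "B \<subseteq> ?C" by (auto intro: inf.cobounded1)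
    ultimately have "?C = B" using B unfolding stone_spectrum_def by blast
    moreover have "a \<in> ?C" using dual_ideal_top[OF dB] by (metis (mono_tags, lifting) inf_top_left mem_Collect_eq order_refl)
    ultimately show ?thesis using na by blast
  qed
qed

lemma spec_inf: "B \<in> stone_spectrum \<Longrightarrow> inf a b \<in> B \<longleftrightarrow> a \<in> B \<and> b \<in> B"
  by (rule dual_ideal_inf[OF spec_dual])

lemma spec_sup:
  fixes a :: "'a::boolean_algebra"
  assumes B: "B \<in> stone_spectrum"
  shows "sup a b \<in> B \<longleftrightarrow> a \<in> B \<or> b \<in> B"
proof
  assume s: "sup a b \<in> B"
  show "a \<in> B \<or> b \<in> B"
  proof (rule ccontr)
    assume "\<not> (a \<in> B \<or> b \<in> B)"
    then have "- a \<in> B" "- b \<in> B" using spec_compl[OF B] by auto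
    then have "- sup a b \<in> B" using spec_inf[OF B] by simp
    then show False using s spec_compl[OF B] by blast
  qed
next
  assume "a \<in> B \<or> b \<in> B"
  then show "sup a b \<in> B" using dual_ideal_up[OF spec_dual[OF B]] by auto
qed

lemma spec_top: "B \<in> stone_spectrum \<Longrightarrow> top \<in> B"
  by (rule dual_ideal_top[OF spec_dual])

lemma spec_bot: "B \<in> stone_spectrum \<Longrightarrow> bot \<notin> B"
  by (rule dual_ideal_bot[OF spec_dual])

lemma spec_up: "B \<in> stone_spectrum \<Longrightarrow> a \<in> B \<Longrightarrow> a \<le> b \<Longrightarrow> b \<in> B"
  by (rule dual_ideal_up[OF spec_dual])

lemma exists_spec:
  fixes a :: "'a::boolean_algebra"
  assumes "a \<noteq> bot"
  shows "\<exists>B\<in>stone_spectrum. a \<in> B"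
proof -
  have "dual_ideal {x. a \<le> x}"
    unfolding dual_ideal_def using assms by (auto simp: bot_unique)
  from ultra_ext[OF this] show ?thesis by auto
qed

lemma QQ_empty: "QQ (a::'a::boolean_algebra) = {} \<Longrightarrow> a = bot"
  using exists_spec by blast

lemma QQ_le:
  fixes a c :: "'a::boolean_algebra"
  assumes "QQ a \<subseteq> QQ c"
  shows "a \<le> c"
proof (rule ccontr)
  assume "\<not> a \<le> c"
  then have "inf a (- c) \<noteq> bot" by (simp add: inf_shunt)
  then obtain B where B: "B \<in> stone_spectrum" "inf a (- c) \<in> B" using exists_spec by blast
  then have "a \<in> B" "- c \<in> B" using spec_inf by auto
  then show False using assms B spec_compl by blast
qed

lemma topspace_stone: "topspace stone_topology = (stone_spectrum :: 'a::boolean_algebra set set)"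
proof -
  have "\<Union>{QQ a | a. True} = (stone_spectrum :: 'a set set)"
  proof (intro equalityI subsetI)
    fix B :: "'a set" assume "B \<in> \<Union>{QQ a | a. True}" then show "B \<in> stone_spectrum" by auto
  next
    fix B :: "'a set" assume "B \<in> stone_spectrum"
    then have "B \<in> QQ top" using spec_top by simp
    then show "B \<in> \<Union>{QQ a | a. True}" by blast
  qed
  then show ?thesis unfolding stone_topology_def topology_generated_by_topspace .
qed

lemma QQ_open: "openin stone_topology (QQ a)"
  unfolding stone_topology_def by (rule topology_generated_by_Basis) blast

lemma QQ_inf: "QQ (inf a b) = QQ a \<inter> QQ b"
  using spec_inf by blast

lemma QQ_sup: "QQ (sup a b) = QQ a \<union> QQ b"
  using spec_sup by blast

lemma openin_stone:
  "openin stone_topology U \<longleftrightarrow> U \<subseteq> (stone_spectrum :: 'a::boolean_algebra set set) \<and> (\<forall>B\<in>U. \<exists>a\<in>B. QQ a \<subseteq> U)"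
proof
  assume "openin stone_topology U"
  then have U: "generate_topology_on {QQ a | a. True} U"
    unfolding stone_topology_def by (rule openin_topology_generated_by)
  have "\<forall>B\<in>U. B \<in> stone_spectrum \<and> (\<exists>a\<in>B. QQ a \<subseteq> U)" using U
  proof (induction rule: generate_topology_on.induct)
    case Empty
    then show ?case by simp
  next
    case (Int a b)
    show ?case
    proof
      fix B assume B: "B \<in> a \<inter> b"
      then obtain x y where xy: "x \<in> B" "QQ x \<subseteq> a" "y \<in> B" "QQ y \<subseteq> b" and S: "B \<in> stone_spectrum"
        using Int.IH by blast
      have "inf x y \<in> B" using xy S spec_inf by blast
      moreover have "QQ (inf x y) \<subseteq> a \<inter> b" using xy QQ_inf[of x y] by blast
      ultimately show "B \<in> stone_spectrum \<and> (\<exists>c\<in>B. QQ c \<subseteq> a \<inter> b)" using S by blast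
    qed
  next
    case (UN K)
    show ?case
    proof
      fix B assume "B \<in> \<Union>K"
      then obtain k where k: "k \<in> K" "B \<in> k" by blast
      then obtain a where "B \<in> stone_spectrum" "a \<in> B" "QQ a \<subseteq> k" using UN.IH by blast
      then show "B \<in> stone_spectrum \<and> (\<exists>a\<in>B. QQ a \<subseteq> \<Union>K)" using k by blast
    qed
  next
    case (Basis s)
    then obtain a where s: "s = QQ a" by blast
    show ?case unfolding s by blast
  qed
  then show "U \<subseteq> stone_spectrum \<and> (\<forall>B\<in>U. \<exists>a\<in>B. QQ a \<subseteq> U)" by blast
next
  assume H: "U \<subseteq> stone_spectrum \<and> (\<forall>B\<in>U. \<exists>a\<in>B. QQ a \<subseteq> U)"
  have "U = \<Union>{QQ a | a. QQ a \<subseteq> U}"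
  proof (intro equalityI subsetI)
    fix B assume "B \<in> U"
    then obtain a where "a \<in> B" "QQ a \<subseteq> U" using H by blast
    moreover have "B \<in> stone_spectrum" using H \<open>B \<in> U\<close> by blast
    ultimately show "B \<in> \<Union>{QQ a | a. QQ a \<subseteq> U}" by blast
  next
    fix B assume "B \<in> \<Union>{QQ a | a. QQ a \<subseteq> U}"
    then show "B \<in> U" by blast
  qed
  moreover have "openin stone_topology (\<Union>{QQ a | a. QQ a \<subseteq> U})"
    by (rule openin_Union) (auto simp only: QQ_open)
  ultimately show "openin stone_topology U" by simp
qed

inductive_set Mset :: "'a::boolean_algebra set \<Rightarrow> 'a set" for A where
  Mtop: "top \<in> Mset A"
| Mstep: "y \<in> Mset A \<Longrightarrow> a \<in> A \<Longrightarrow> inf y (- a) \<in> Mset A"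

lemma Mset_fin:
  "y \<in> Mset A \<Longrightarrow> \<exists>D. finite D \<and> D \<subseteq> A \<and> (\<forall>B\<in>stone_spectrum. (\<forall>d\<in>D. d \<notin> B) \<longrightarrow> y \<in> B)"
proof (induction rule: Mset.induct)
  case Mtop
  then show ?case using spec_top by blast
next
  case (Mstep y a)
  then obtain D where D: "finite D" "D \<subseteq> A" "\<forall>B\<in>stone_spectrum. (\<forall>d\<in>D. d \<notin> B) \<longrightarrow> y \<in> B" by blast
  show ?case
  proof (intro exI[of _ "insert a D"] conjI ballI impI)
    fix B :: "'a set" assume B: "B \<in> stone_spectrum" and nd: "\<forall>d\<in>insert a D. d \<notin> B"
    then have "y \<in> B" "- a \<in> B" using D spec_compl by auto
    then show "inf y (- a) \<in> B" using spec_inf[OF B] by blast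
  qed (use D Mstep in auto)
qed

lemma Mset_meet: "y2 \<in> Mset A \<Longrightarrow> y1 \<in> Mset A \<Longrightarrow> inf y1 y2 \<in> Mset A"
proof (induction y2 rule: Mset.induct)
  case Mtop
  then show ?case by simp
next
  case (Mstep y a)
  then have "inf (inf y1 y) (- a) \<in> Mset A" by (blast intro: Mset.Mstep)
  then show ?case by (simp add: inf_assoc)
qed

lemma stone_compact: "compact_space (stone_topology :: 'a::boolean_algebra set topology)"
  unfolding compact_space_def compactin_def
proof (intro conjI allI impI)
  show "topspace stone_topology \<subseteq> topspace (stone_topology :: 'a set topology)" by (rule order_refl)
  fix \<U> :: "'a set set set"
  assume H: "(\<forall>U\<in>\<U>. openin stone_topology U) \<and> topspace stone_topology \<subseteq> \<Union>\<U>"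
  let ?A = "{a. \<exists>U\<in>\<U>. QQ a \<subseteq> U}"
  have "\<exists>D. finite D \<and> D \<subseteq> ?A \<and> stone_spectrum \<subseteq> (\<Union>d\<in>D. QQ d)"
  proof (rule ccontr)
    assume nf: "\<not> ?thesis"
    have nf': "\<exists>B\<in>stone_spectrum. \<forall>d\<in>D. d \<notin> B" if "finite D" "D \<subseteq> ?A" for D
    proof -
      have "\<not> stone_spectrum \<subseteq> (\<Union>d\<in>D. QQ d)" using nf that by blast
      then obtain B where "B \<in> stone_spectrum" "B \<notin> (\<Union>d\<in>D. QQ d)" by blast
      then show ?thesis by blast
    qed
    let ?F = "{x. \<exists>y\<in>Mset ?A. y \<le> x}"
    have "dual_ideal ?F"
      unfolding dual_ideal_def
    proof (intro conjI allI impI)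
      have "top \<in> ?F" using Mset.Mtop by blast
      then show "?F \<noteq> {}" by blast
      show "bot \<notin> ?F"
      proof
        assume "bot \<in> ?F"
        then obtain y where y1: "y \<in> Mset ?A" and "y \<le> bot" by blast
        then have y2: "y = bot" by (simp add: bot_unique)
        from Mset_fin[OF y1] obtain D where D: "finite D" "D \<subseteq> ?A"
          "\<forall>B\<in>stone_spectrum. (\<forall>d\<in>D. d \<notin> B) \<longrightarrow> y \<in> B" by blast
        from nf'[OF D(1,2)] obtain B where "B \<in> stone_spectrum" "\<forall>d\<in>D. d \<notin> B" by blast
        with D(3) y2 spec_bot show False by blast
      qed
      show "b \<in> ?F" if "a \<in> ?F \<and> a \<le> b" for a b
      proof -
        from that obtain y where "y \<in> Mset ?A" "y \<le> a" "a \<le> b" by blast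
        then have "y \<in> Mset ?A" "y \<le> b" by auto
        then show ?thesis by blast
      qed
      show "inf a b \<in> ?F" if "a \<in> ?F \<and> b \<in> ?F" for a b
      proof -
        from that obtain y1 y2 where "y1 \<in> Mset ?A" "y1 \<le> a" "y2 \<in> Mset ?A" "y2 \<le> b" by blast
        then have "inf y1 y2 \<in> Mset ?A" "inf y1 y2 \<le> inf a b" using Mset_meet inf_mono by blast+
        then show ?thesis by blast
      qed
    qed
    from ultra_ext[OF this] obtain B where B: "B \<in> stone_spectrum" "?F \<subseteq> B" by blast
    then have "B \<in> \<Union>\<U>" using H topspace_stone by blast
    then obtain U where U: "U \<in> \<U>" "B \<in> U" by blast
    then have "openin stone_topology U" using H by blast
    then obtain a where a: "a \<in> B" "QQ a \<subseteq> U" using U(2) unfolding openin_stone by blast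
    then have "a \<in> ?A" using U by blast
    then have "inf top (- a) \<in> Mset ?A" by (blast intro: Mset.intros)
    then have "- a \<in> ?F" by auto
    then have "- a \<in> B" using B by blast
    then show False using a spec_compl[OF B(1)] by blast
  qed
  then obtain D where D: "finite D" "D \<subseteq> ?A" "stone_spectrum \<subseteq> (\<Union>d\<in>D. QQ d)" by blast
  define g where "g a = (SOME U. U \<in> \<U> \<and> QQ a \<subseteq> U)" for a
  have g: "g a \<in> \<U> \<and> QQ a \<subseteq> g a" if "a \<in> ?A" for a
  proof -
    have "\<exists>U. U \<in> \<U> \<and> QQ a \<subseteq> U" using that by blast
    then show ?thesis unfolding g_def by (rule someI_ex)
  qed
  show "\<exists>\<V>. finite \<V> \<and> \<V> \<subseteq> \<U> \<and> topspace stone_topology \<subseteq> \<Union>\<V>"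
  proof (intro exI[of _ "g ` D"] conjI)
    show "finite (g ` D)" using D by simp
    show "g ` D \<subseteq> \<U>"
    proof
      fix V assume "V \<in> g ` D"
      then obtain d where d: "d \<in> D" "V = g d" by blast
      have "d \<in> ?A" using D(2) d(1) by (rule subsetD)
      then show "V \<in> \<U>" using g d(2) by blast
    qed
    show "topspace stone_topology \<subseteq> \<Union>(g ` D)"
    proof
      fix B assume "B \<in> topspace (stone_topology :: 'a set topology)"
      then have "B \<in> stone_spectrum" using topspace_stone by blast
      then obtain d where "d \<in> D" "B \<in> QQ d" using D by blast
      have "d \<in> ?A" using D(2) \<open>d \<in> D\<close> by (rule subsetD)
      then have "QQ d \<subseteq> g d" using g by blast
      then have "B \<in> g d" using \<open>B \<in> QQ d\<close> by blast
      then show "B \<in> \<Union>(g ` D)" using \<open>d \<in> D\<close> by blast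
    qed
  qed
qed


lemma sigma_lub:
  assumes "sigma_complete TYPE('a::boolean_algebra)" "countable (S :: 'a set)"
  shows "\<exists>x. is_lub x S"
proof -
  have "countable (uminus ` S)" using assms(2) by simp
  then obtain y where y: "is_glb y (uminus ` S)" using assms(1) unfolding sigma_complete_def by blast
  have "is_lub (- y) S"
    unfolding is_lub_def
  proof (intro conjI ballI allI impI)
    fix s assume "s \<in> S"
    then have "y \<le> - s" using y unfolding is_glb_def by blast
    then show "s \<le> - y" by (rule compl_le_swap1)
  next
    fix z assume z: "\<forall>s\<in>S. s \<le> z"
    have "\<forall>t\<in>uminus ` S. - z \<le> t" using z by auto
    then have "- z \<le> y" using y unfolding is_glb_def by blast
    then show "- y \<le> z" by (metis compl_le_swap2)
  qed
  then show ?thesis by blast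
qed

lemma cont_crit:
  fixes f :: "'a::boolean_algebra set \<Rightarrow> 'b::metric_space"
  assumes H: "\<forall>B\<in>stone_spectrum. \<forall>e>0. \<exists>a\<in>B. \<forall>B'\<in>stone_spectrum. a \<in> B' \<longrightarrow> dist (f B') (f B) < e"
  shows "continuous_map stone_topology euclidean f"
  unfolding continuous_map_def
proof (intro conjI allI impI)
  show "f \<in> topspace stone_topology \<rightarrow> topspace euclidean" by simp
  fix V :: "'b set" assume "openin euclidean V"
  then have oV: "open V" by simp
  show "openin stone_topology {x \<in> topspace stone_topology. f x \<in> V}"
    unfolding openin_stone topspace_stone
  proof (intro conjI ballI)
    show "{x \<in> stone_spectrum. f x \<in> V} \<subseteq> stone_spectrum" by blast
    fix B assume B: "B \<in> {x \<in> stone_spectrum. f x \<in> V}"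
    then obtain e where e: "e > 0" "ball (f B) e \<subseteq> V" using oV open_contains_ball by blast
    from B have "B \<in> stone_spectrum" by blast
    with H e obtain a where a: "a \<in> B" "\<forall>B'\<in>stone_spectrum. a \<in> B' \<longrightarrow> dist (f B') (f B) < e" by blast
    have "QQ a \<subseteq> {x \<in> stone_spectrum. f x \<in> V}"
    proof
      fix B' assume B': "B' \<in> QQ a"
      then have "dist (f B) (f B') < e" using a by (simp add: dist_commute)
      then have "f B' \<in> V" using e by auto
      then show "B' \<in> {x \<in> stone_spectrum. f x \<in> V}" using B' by blast
    qed
    then show "\<exists>a\<in>B. QQ a \<subseteq> {x \<in> stone_spectrum. f x \<in> V}" using a by blast
  qed
qed

lemma csf_mono:
  assumes "complex_spectral_family E" "l1 \<le> l1'" "l2 \<le> l2'"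
  shows "E l1 l2 \<le> E l1' l2'"
proof -
  have "inf (E l1 l2) (E l1' l2') = E l1 l2"
    using assms unfolding complex_spectral_family_def by (simp add: min_absorb1)
  then show ?thesis by (metis inf.orderI)
qed

lemma csf_inf:
  assumes "complex_spectral_family E"
  shows "inf (E l1 l2) (E m1 m2) = E (min l1 m1) (min l2 m2)"
  using assms unfolding complex_spectral_family_def by blast

lemma Sb_char:
  fixes E :: "real \<Rightarrow> real \<Rightarrow> 'a::boolean_algebra"
  assumes E: "E \<in> S_b" and B: "B \<in> stone_spectrum"
  shows "E l1 l2 \<in> B \<Longrightarrow> f_E1 E B \<le> l1 \<and> f_E2 E B \<le> l2"
    and "f_E1 E B < m1 \<Longrightarrow> f_E2 E B < m2 \<Longrightarrow> E m1 m2 \<in> B"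
proof -
  from E have csf: "complex_spectral_family E" unfolding S_b_def bounded_csf_def by blast
  from E obtain m b where mb: "\<forall>l1 l2. (l1 \<le> m \<or> l2 \<le> m) \<longrightarrow> E l1 l2 = bot"
      "\<forall>l1 l2. (b \<le> l1 \<and> b \<le> l2) \<longrightarrow> E l1 l2 = top"
    unfolding S_b_def bounded_csf_def by blast
  let ?S1 = "{l. \<exists>m. E l m \<in> B}"
  let ?S2 = "{m. \<exists>l. E l m \<in> B}"
  have Etop: "E b b \<in> B" using mb spec_top[OF B] by simp
  have ne1: "?S1 \<noteq> {}" using Etop by blast
  have ne2: "?S2 \<noteq> {}" using Etop by blast
  have bd1: "bdd_below ?S1"
  proof (rule bdd_belowI)
    fix x assume "x \<in> ?S1"
    then obtain y where "E x y \<in> B" by blast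
    then have "\<not> x \<le> m" using mb spec_bot[OF B] by metis
    then show "m \<le> x" by simp
  qed
  have bd2: "bdd_below ?S2"
  proof (rule bdd_belowI)
    fix x assume "x \<in> ?S2"
    then obtain y where "E y x \<in> B" by blast
    then have "\<not> x \<le> m" using mb spec_bot[OF B] by metis
    then show "m \<le> x" by simp
  qed
  show "E l1 l2 \<in> B \<Longrightarrow> f_E1 E B \<le> l1 \<and> f_E2 E B \<le> l2"
  proof -
    assume "E l1 l2 \<in> B"
    then have "l1 \<in> ?S1" "l2 \<in> ?S2" by blast+
    then show ?thesis unfolding f_E1_def f_E2_def using bd1 bd2 by (simp add: cInf_lower)
  qed
  show "f_E1 E B < m1 \<Longrightarrow> f_E2 E B < m2 \<Longrightarrow> E m1 m2 \<in> B"
  proof -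
    assume "f_E1 E B < m1" "f_E2 E B < m2"
    then obtain x y where x: "x \<in> ?S1" "x < m1" and y: "y \<in> ?S2" "y < m2"
      unfolding f_E1_def f_E2_def using cInf_lessD[OF ne1] cInf_lessD[OF ne2] by blast
    from x obtain p where p: "E x p \<in> B" by blast
    from y obtain q where q: "E q y \<in> B" by blast
    define K where "K = max (max p q) (max m1 m2)"
    have "E x p \<le> E m1 K" using csf x by (intro csf_mono) (auto simp: K_def)
    then have 1: "E m1 K \<in> B" using p spec_up[OF B] by blast
    have "E q y \<le> E K m2" using csf y by (intro csf_mono) (auto simp: K_def)
    then have 2: "E K m2 \<in> B" using q spec_up[OF B] by blast
    have "inf (E m1 K) (E K m2) = E m1 m2"
      using csf_inf[OF csf, of m1 K K m2] by (simp add: K_def)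
    then show ?thesis using 1 2 spec_inf[OF B] by metis
  qed
qed

lemma Sb_bounds:
  fixes E :: "real \<Rightarrow> real \<Rightarrow> 'a::boolean_algebra"
  assumes E: "E \<in> S_b"
  obtains b where "\<forall>B\<in>stone_spectrum. f_E1 E B \<le> b \<and> f_E2 E B \<le> b"
proof -
  from E obtain m b where mb: "\<forall>l1 l2. (b \<le> l1 \<and> b \<le> l2) \<longrightarrow> E l1 l2 = top"
    unfolding S_b_def bounded_csf_def by blast
  have "\<forall>B\<in>stone_spectrum. f_E1 E B \<le> b \<and> f_E2 E B \<le> b"
  proof
    fix B :: "'a set" assume B: "B \<in> stone_spectrum"
    have "E b b \<in> B" using mb spec_top[OF B] by simp
    then show "f_E1 E B \<le> b \<and> f_E2 E B \<le> b" using Sb_char(1)[OF E B] by blast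
  qed
  then show ?thesis using that by blast
qed

lemma fE_cont:
  fixes E :: "real \<Rightarrow> real \<Rightarrow> 'a::boolean_algebra"
  assumes E: "E \<in> S_b"
  shows "continuous_map stone_topology euclidean (f_E E)"
proof (rule cont_crit, intro ballI allI impI)
  fix B0 :: "'a set" and e :: real
  assume B0: "B0 \<in> stone_spectrum" and e: "e > 0"
  obtain b where b: "\<forall>B\<in>stone_spectrum. f_E1 E B \<le> b \<and> f_E2 E B \<le> b" using Sb_bounds[OF E] by blast
  define x where "x = f_E1 E B0"
  define y where "y = f_E2 E B0"
  define d where "d = e / 4"
  define K where "K = b + 1"
  have d: "d > 0" using e by (simp add: d_def)
  have a0: "E (x + d) (y + d) \<in> B0" using Sb_char(2)[OF E B0] d by (simp add: x_def y_def)
  have "E (x - d) K \<notin> B0"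
  proof
    assume "E (x - d) K \<in> B0"
    then have "x \<le> x - d" using Sb_char(1)[OF E B0] by (simp add: x_def)
    then show False using d by simp
  qed
  then have c1: "- E (x - d) K \<in> B0" using spec_compl[OF B0] by blast
  have "E K (y - d) \<notin> B0"
  proof
    assume "E K (y - d) \<in> B0"
    then have "y \<le> y - d" using Sb_char(1)[OF E B0] by (simp add: y_def)
    then show False using d by simp
  qed
  then have c2: "- E K (y - d) \<in> B0" using spec_compl[OF B0] by blast
  let ?a = "inf (E (x + d) (y + d)) (inf (- E (x - d) K) (- E K (y - d)))"
  have "?a \<in> B0" using a0 c1 c2 spec_inf[OF B0] by simp
  moreover have "dist (f_E E B') (f_E E B0) < e" if B': "B' \<in> stone_spectrum" "?a \<in> B'" for B'
  proof -
    have i: "E (x + d) (y + d) \<in> B'" "E (x - d) K \<notin> B'" "E K (y - d) \<notin> B'"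
      using B' spec_inf[OF B'(1)] spec_compl[OF B'(1)] by auto
    have u: "f_E1 E B' \<le> x + d" "f_E2 E B' \<le> y + d" using Sb_char(1)[OF E B'(1) i(1)] by auto
    have l1: "f_E1 E B' \<ge> x - d"
    proof (rule ccontr)
      assume "\<not> ?thesis"
      then have "f_E1 E B' < x - d" by simp
      moreover have "f_E2 E B' < K" using b B' by (simp add: K_def) (smt (verit))
      ultimately have "E (x - d) K \<in> B'" using Sb_char(2)[OF E B'(1)] by blast
      then show False using i by blast
    qed
    have l2: "f_E2 E B' \<ge> y - d"
    proof (rule ccontr)
      assume "\<not> ?thesis"
      then have "f_E2 E B' < y - d" by simp
      moreover have "f_E1 E B' < K" using b B' by (simp add: K_def) (smt (verit))
      ultimately have "E K (y - d) \<in> B'" using Sb_char(2)[OF E B'(1)] by blast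
      then show False using i by blast
    qed
    let ?z = "f_E E B' - f_E E B0"
    have "Re ?z = f_E1 E B' - x" "Im ?z = f_E2 E B' - y"
      using B' B0 by (simp_all add: f_E_def x_def y_def)
    then have "\<bar>Re ?z\<bar> \<le> d" "\<bar>Im ?z\<bar> \<le> d" using u l1 l2 by auto
    then have "cmod ?z \<le> 2 * d" using cmod_le[of ?z] by linarith
    then show ?thesis using d by (simp add: dist_norm d_def)
  qed
  ultimately show "\<exists>a\<in>B0. \<forall>B'\<in>stone_spectrum. a \<in> B' \<longrightarrow> dist (f_E E B') (f_E E B0) < e"
    by blast
qed

lemma fE_in_CQ:
  fixes E :: "real \<Rightarrow> real \<Rightarrow> 'a::boolean_algebra"
  assumes E: "E \<in> S_b"
  shows "f_E E \<in> C_Q"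
  unfolding C_Q_def using fE_cont[OF E] by (simp add: f_E_def)

lemma Sb_le:
  fixes E F :: "real \<Rightarrow> real \<Rightarrow> 'a::boolean_algebra"
  assumes E: "E \<in> S_b" and F: "F \<in> S_b"
    and eq: "\<forall>B\<in>stone_spectrum. f_E1 E B = f_E1 F B \<and> f_E2 E B = f_E2 F B"
  shows "E l1 l2 \<le> F l1 l2"
proof -
  from F have csf: "complex_spectral_family F" unfolding S_b_def bounded_csf_def by blast
  then have glb: "is_glb (F l1 l2) {F m1 m2 | m1 m2. m1 \<in> \<rat> \<and> m2 \<in> \<rat> \<and> l1 < m1 \<and> l2 < m2}"
    unfolding complex_spectral_family_def by blast
  have "E l1 l2 \<le> F m1 m2" if "l1 < m1" "l2 < m2" for m1 m2
  proof (rule QQ_le, rule subsetI)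
    fix B assume "B \<in> QQ (E l1 l2)"
    then have B: "B \<in> stone_spectrum" "E l1 l2 \<in> B" by auto
    then have "f_E1 E B \<le> l1" "f_E2 E B \<le> l2" using Sb_char(1)[OF E] by auto
    then have "f_E1 F B < m1" "f_E2 F B < m2" using eq B that by auto
    then have "F m1 m2 \<in> B" using Sb_char(2)[OF F B(1)] by blast
    then show "B \<in> QQ (F m1 m2)" using B by blast
  qed
  then show ?thesis using glb unfolding is_glb_def by blast
qed

lemma fE_inj: "inj_on (f_E :: (real \<Rightarrow> real \<Rightarrow> 'a::boolean_algebra) \<Rightarrow> 'a set \<Rightarrow> complex) S_b"
proof (rule inj_onI)
  fix E F :: "real \<Rightarrow> real \<Rightarrow> 'a"
  assume E: "E \<in> S_b" and F: "F \<in> S_b" and eq: "f_E E = f_E F"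
  have eq': "\<forall>B\<in>stone_spectrum. f_E1 E B = f_E1 F B \<and> f_E2 E B = f_E2 F B"
  proof
    fix B :: "'a set" assume B: "B \<in> stone_spectrum"
    have "f_E E B = f_E F B" using eq by simp
    then show "f_E1 E B = f_E1 F B \<and> f_E2 E B = f_E2 F B" using B by (simp add: f_E_def)
  qed
  show "E = F"
  proof (intro ext)
    fix l1 l2
    show "E l1 l2 = F l1 l2"
      using Sb_le[OF E F eq'] Sb_le[OF F E] eq' by (metis order.antisym)
  qed
qed

lemma fin_join:
  fixes D :: "'a::boolean_algebra set"
  assumes "finite D"
  shows "\<exists>c. QQ c = (\<Union>d\<in>D. QQ d)"
  using assms
proof (induction rule: finite_induct)
  case empty
  have "QQ (bot :: 'a) = {}" using spec_bot by blast
  then show ?case by auto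
next
  case (insert x F)
  then obtain c where "QQ c = (\<Union>d\<in>F. QQ d)" by blast
  then have "QQ (sup x c) = (\<Union>d\<in>insert x F. QQ d)" using QQ_sup[of x c] by auto
  then show ?case by blast
qed

lemma key:
  fixes U F :: "'a::boolean_algebra set set" and K :: "nat \<Rightarrow> 'a set set"
  assumes sc: "sigma_complete TYPE('a)"
    and U: "openin stone_topology U" and F: "closedin stone_topology F" and UF: "U \<subseteq> F"
    and K: "\<And>n. closedin stone_topology (K n)" and UK: "U = (\<Union>n. K n)"
  shows "\<exists>s. (\<forall>a. QQ a \<subseteq> U \<longrightarrow> a \<le> s) \<and> QQ s \<subseteq> F"
proof -
  have Usp: "U \<subseteq> stone_spectrum" using U openin_stone by blast
  have "\<exists>c. K n \<subseteq> QQ c \<and> QQ c \<subseteq> U" for n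
  proof -
    have cK: "compactin stone_topology (K n)" using closedin_compact_space[OF stone_compact K] .
    let ?V = "QQ ` {a. QQ a \<subseteq> U}"
    have "\<forall>V\<in>?V. openin stone_topology V" using QQ_open by blast
    moreover have "K n \<subseteq> \<Union>?V"
    proof
      fix B assume "B \<in> K n"
      then have "B \<in> U" using UK by blast
      then obtain a where "a \<in> B" "QQ a \<subseteq> U" using U openin_stone by blast
      moreover have "B \<in> stone_spectrum" using \<open>B \<in> U\<close> Usp by blast
      ultimately show "B \<in> \<Union>?V" by blast
    qed
    ultimately obtain W where W: "finite W" "W \<subseteq> ?V" "K n \<subseteq> \<Union>W"
      using cK unfolding compactin_def by meson
    from finite_subset_image[OF W(1,2)] obtain D where D: "D \<subseteq> {a. QQ a \<subseteq> U}" "finite D" "W = QQ ` D"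
      by blast
    obtain c where c: "QQ c = (\<Union>d\<in>D. QQ d)" using fin_join[OF D(2)] by blast
    have "K n \<subseteq> QQ c" using W(3) D(3) c by simp
    moreover have "QQ c \<subseteq> U" using c D(1) by blast
    ultimately show ?thesis by blast
  qed
  then obtain c where c: "\<And>n. K n \<subseteq> QQ (c n) \<and> QQ (c n) \<subseteq> U" by metis
  have "countable (range c)" by simp
  then obtain s where s: "is_lub s (range c)" using sigma_lub[OF sc] by blast
  have cs: "c n \<le> s" for n using s unfolding is_lub_def by blast
  have A: "a \<le> s" if "QQ a \<subseteq> U" for a
  proof (rule QQ_le, rule subsetI)
    fix B assume B: "B \<in> QQ a"
    then have "B \<in> U" using that by blast
    then obtain n where "B \<in> K n" using UK by blast
    then have "c n \<in> B" "B \<in> stone_spectrum" using c[of n] by blast+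
    then have "s \<in> B" using cs spec_up by blast
    then show "B \<in> QQ s" using \<open>B \<in> stone_spectrum\<close> by blast
  qed
  have "QQ s \<subseteq> F"
  proof
    fix B assume B: "B \<in> QQ s"
    show "B \<in> F"
    proof (rule ccontr)
      assume nF: "B \<notin> F"
      have "openin stone_topology (topspace stone_topology - F)" using F closedin_def by blast
      then have o: "openin stone_topology (stone_spectrum - F)" by (simp add: topspace_stone)
      have "B \<in> stone_spectrum - F" using B nF by blast
      then obtain d where d: "d \<in> B" "QQ d \<subseteq> stone_spectrum - F" using o openin_stone by blast
      have "c n \<le> - d" for n
      proof -
        have "QQ (inf (c n) d) = {}" using QQ_inf[of "c n" d] c[of n] d(2) UF by blast
        then have "inf (c n) d = bot" by (rule QQ_empty)
        then show ?thesis by (simp add: inf_shunt)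
      qed
      then have "s \<le> - d" using s unfolding is_lub_def by blast
      then have "- d \<in> B" using B spec_up by blast
      then show False using d(1) spec_compl B by blast
    qed
  qed
  then show ?thesis using A by blast
qed

lemma CQ_bounded:
  fixes f :: "'a::boolean_algebra set \<Rightarrow> complex"
  assumes "continuous_map stone_topology euclidean f"
  shows "\<exists>M. \<forall>B\<in>stone_spectrum. cmod (f B) \<le> M"
proof -
  have "compactin stone_topology (topspace stone_topology :: 'a set set)"
    using stone_compact unfolding compact_space_def .
  then have "compactin euclidean (f ` stone_spectrum)"
    using image_compactin[OF _ assms] by (simp add: topspace_stone)
  then have "compact (f ` stone_spectrum)" by simp
  then have "bounded (f ` stone_spectrum)" by (rule compact_imp_bounded)
  then show ?thesis unfolding bounded_iff by blast
qed

lemma dens_rat: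
  fixes x l :: real
  assumes "\<And>m. m \<in> \<rat> \<Longrightarrow> l < m \<Longrightarrow> x \<le> m"
  shows "x \<le> l"
proof (rule ccontr)
  assume "\<not> x \<le> l"
  then obtain r where "r \<in> \<rat>" "l < r" "r < x" using Rats_dense_in_real[of l x] by auto
  then show False using assms by force
qed

lemma rat_above: "\<exists>r\<in>\<rat>. (x::real) < r"
  using Rats_dense_in_real[of x "x + 1"] by auto

lemma rat_below: "\<exists>r\<in>\<rat>. r < (x::real)"
  using Rats_dense_in_real[of "x - 1" x] by auto

lemma interior_elem:
  fixes f :: "'a::boolean_algebra set \<Rightarrow> complex"
  assumes sc: "sigma_complete TYPE('a)" and cf: "continuous_map stone_topology euclidean f"
  shows "\<exists>e. QQ e \<subseteq> {B \<in> stone_spectrum. Re (f B) \<le> l1 \<and> Im (f B) \<le> l2} \<and>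
             (\<forall>a. QQ a \<subseteq> {B \<in> stone_spectrum. Re (f B) \<le> l1 \<and> Im (f B) \<le> l2} \<longrightarrow> a \<le> e)"
proof -
  define R where "R l1 l2 = {B \<in> stone_spectrum. Re (f B) \<le> l1 \<and> Im (f B) \<le> l2}" for l1 l2
  define U where "U m1 m2 = {B \<in> stone_spectrum. Re (f B) < m1 \<and> Im (f B) < m2}" for m1 m2
  have S2: "\<exists>s. (\<forall>a. QQ a \<subseteq> U m1 m2 \<longrightarrow> a \<le> s) \<and> QQ s \<subseteq> R m1 m2" for m1 m2
  proof (rule key[OF sc])
    have "open {z::complex. Re z < m1 \<and> Im z < m2}"
      by (intro open_Collect_conj open_Collect_less continuous_intros)
    then have "openin stone_topology {x \<in> topspace stone_topology. f x \<in> {z::complex. Re z < m1 \<and> Im z < m2}}"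
      using openin_continuous_map_preimage[OF cf, of "{z::complex. Re z < m1 \<and> Im z < m2}"] by simp
    then show "openin stone_topology (U m1 m2)" by (simp add: U_def topspace_stone)
    have "closed {z::complex. Re z \<le> m1 \<and> Im z \<le> m2}"
      by (intro closed_Collect_conj closed_Collect_le continuous_intros)
    then have "closedin stone_topology {x \<in> topspace stone_topology. f x \<in> {z::complex. Re z \<le> m1 \<and> Im z \<le> m2}}"
      using closedin_continuous_map_preimage[OF cf, of "{z::complex. Re z \<le> m1 \<and> Im z \<le> m2}"] by simp
    then show "closedin stone_topology (R m1 m2)" by (simp add: R_def topspace_stone)
    show "U m1 m2 \<subseteq> R m1 m2" by (auto simp: U_def R_def)
    fix n :: nat
    have "closed {z::complex. Re z \<le> m1 - inverse (real (Suc n)) \<and> Im z \<le> m2 - inverse (real (Suc n))}"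
      by (intro closed_Collect_conj closed_Collect_le continuous_intros)
    then have "closedin stone_topology {x \<in> topspace stone_topology. f x \<in> {z::complex. Re z \<le> m1 - inverse (real (Suc n)) \<and> Im z \<le> m2 - inverse (real (Suc n))}}"
      using closedin_continuous_map_preimage[OF cf, of "{z::complex. Re z \<le> m1 - inverse (real (Suc n)) \<and> Im z \<le> m2 - inverse (real (Suc n))}"] by simp
    then show "closedin stone_topology (R (m1 - inverse (real (Suc n))) (m2 - inverse (real (Suc n))))"
      by (simp add: R_def topspace_stone)
  next
    show "U m1 m2 = (\<Union>n. R (m1 - inverse (real (Suc n))) (m2 - inverse (real (Suc n))))"
    proof (intro equalityI subsetI)
      fix B assume "B \<in> U m1 m2"
      then have B: "B \<in> stone_spectrum" "0 < min (m1 - Re (f B)) (m2 - Im (f B))" by (auto simp: U_def)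
      then obtain n where "inverse (real (Suc n)) < min (m1 - Re (f B)) (m2 - Im (f B))"
        using reals_Archimedean by blast
      then have "B \<in> R (m1 - inverse (real (Suc n))) (m2 - inverse (real (Suc n)))"
        using B by (auto simp: R_def)
      then show "B \<in> (\<Union>n. R (m1 - inverse (real (Suc n))) (m2 - inverse (real (Suc n))))" by blast
    next
      fix B assume "B \<in> (\<Union>n. R (m1 - inverse (real (Suc n))) (m2 - inverse (real (Suc n))))"
      then obtain n where "B \<in> R (m1 - inverse (real (Suc n))) (m2 - inverse (real (Suc n)))" by blast
      then have h: "B \<in> stone_spectrum" "Re (f B) \<le> m1 - inverse (real (Suc n))"
          "Im (f B) \<le> m2 - inverse (real (Suc n))" unfolding R_def by blast+
      have pos: "inverse (real (Suc n)) > 0" by simp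
      have "Re (f B) < m1" "Im (f B) < m2" using h pos by linarith+
      then show "B \<in> U m1 m2" using h unfolding U_def by blast
    qed
  qed
  define s where "s m1 m2 = (SOME s. (\<forall>a. QQ a \<subseteq> U m1 m2 \<longrightarrow> a \<le> s) \<and> QQ s \<subseteq> R m1 m2)" for m1 m2
  have s: "(\<forall>a. QQ a \<subseteq> U m1 m2 \<longrightarrow> a \<le> s m1 m2) \<and> QQ (s m1 m2) \<subseteq> R m1 m2" for m1 m2
    unfolding s_def by (rule someI_ex[OF S2])
  define T where "T = {s m1 m2 | m1 m2. m1 \<in> \<rat> \<and> m2 \<in> \<rat> \<and> l1 < m1 \<and> l2 < m2}"
  have "T \<subseteq> (\<lambda>(m1, m2). s m1 m2) ` (\<rat> \<times> \<rat>)" unfolding T_def by auto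
  moreover have "countable ((\<lambda>(m1, m2). s m1 m2) ` (\<rat> \<times> \<rat>))"
    using countable_rat by (intro countable_image countable_SIGMA) auto
  ultimately have "countable T" by (rule countable_subset)
  then obtain e where e: "is_glb e T" using sc unfolding sigma_complete_def by blast
  have 1: "QQ e \<subseteq> R l1 l2"
  proof
    fix B assume B: "B \<in> QQ e"
    have H: "Re (f B) \<le> m1 \<and> Im (f B) \<le> m2" if "m1 \<in> \<rat>" "m2 \<in> \<rat>" "l1 < m1" "l2 < m2" for m1 m2
    proof -
      have "e \<le> s m1 m2" using e that unfolding is_glb_def T_def by blast
      then have "B \<in> QQ (s m1 m2)" using B spec_up by blast
      then show ?thesis using s[of m1 m2] by (auto simp: R_def)
    qed
    obtain r1 where r1: "r1 \<in> \<rat>" "l1 < r1" using rat_above by blast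
    obtain r2 where r2: "r2 \<in> \<rat>" "l2 < r2" using rat_above by blast
    have "Re (f B) \<le> l1"
    proof (rule dens_rat)
      fix m assume "m \<in> \<rat>" "l1 < m"
      then show "Re (f B) \<le> m" using H[of m r2] r2 by blast
    qed
    moreover have "Im (f B) \<le> l2"
    proof (rule dens_rat)
      fix m assume "m \<in> \<rat>" "l2 < m"
      then show "Im (f B) \<le> m" using H[of r1 m] r1 by blast
    qed
    ultimately show "B \<in> R l1 l2" using B unfolding R_def by blast
  qed
  have 2: "a \<le> e" if "QQ a \<subseteq> R l1 l2" for a
  proof -
    have "a \<le> t" if "t \<in> T" for t
    proof -
      from that obtain m1 m2 where m: "t = s m1 m2" "l1 < m1" "l2 < m2" unfolding T_def by blast
      have "R l1 l2 \<subseteq> U m1 m2" using m by (auto simp: R_def U_def)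
      then show ?thesis using s[of m1 m2] \<open>QQ a \<subseteq> R l1 l2\<close> m(1) by blast
    qed
    then show ?thesis using e unfolding is_glb_def by blast
  qed
  show ?thesis using 1 2 unfolding R_def by blast
qed

lemma surj_part:
  fixes f :: "'a::boolean_algebra set \<Rightarrow> complex"
  assumes sc: "sigma_complete TYPE('a)" and fC: "f \<in> C_Q"
  shows "\<exists>E\<in>S_b. f_E E = f"
proof -
  have cf: "continuous_map stone_topology euclidean f" and f0: "\<And>B. B \<notin> stone_spectrum \<Longrightarrow> f B = 0"
    using fC unfolding C_Q_def by auto
  obtain M where M: "\<forall>B\<in>stone_spectrum. cmod (f B) \<le> M" using CQ_bounded[OF cf] by blast
  define R where "R l1 l2 = {B \<in> stone_spectrum. Re (f B) \<le> l1 \<and> Im (f B) \<le> l2}" for l1 l2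
  define E where "E l1 l2 = (SOME e. QQ e \<subseteq> R l1 l2 \<and> (\<forall>a. QQ a \<subseteq> R l1 l2 \<longrightarrow> a \<le> e))" for l1 l2
  have ex: "\<exists>e. QQ e \<subseteq> R l1 l2 \<and> (\<forall>a. QQ a \<subseteq> R l1 l2 \<longrightarrow> a \<le> e)" for l1 l2
    unfolding R_def by (rule interior_elem[OF sc cf])
  have EP: "QQ (E l1 l2) \<subseteq> R l1 l2 \<and> (\<forall>a. QQ a \<subseteq> R l1 l2 \<longrightarrow> a \<le> E l1 l2)" for l1 l2
    unfolding E_def by (rule someI_ex[OF ex])
  have Ele: "a \<le> E l1 l2 \<longleftrightarrow> QQ a \<subseteq> R l1 l2" for a l1 l2
  proof
    assume a: "a \<le> E l1 l2"
    show "QQ a \<subseteq> R l1 l2"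
    proof
      fix B assume B: "B \<in> QQ a"
      then have "B \<in> stone_spectrum" "a \<in> B" by auto
      then have "E l1 l2 \<in> B" using a spec_up by blast
      then have "B \<in> QQ (E l1 l2)" using \<open>B \<in> stone_spectrum\<close> by blast
      then show "B \<in> R l1 l2" using conjunct1[OF EP[of l1 l2]] by (rule subsetD[rotated])
    qed
  next
    assume "QQ a \<subseteq> R l1 l2" then show "a \<le> E l1 l2" using conjunct2[OF EP[of l1 l2]] by blast
  qed
  have Rmono: "R l1 l2 \<subseteq> R l1' l2'" if "l1 \<le> l1'" "l2 \<le> l2'" for l1 l2 l1' l2'
    using that unfolding R_def by auto
  have Rint: "R l1 l2 \<inter> R m1 m2 = R (min l1 m1) (min l2 m2)" for l1 l2 m1 m2
    unfolding R_def by auto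
  have Rempty: "R l1 l2 = {}" if "l1 < - M \<or> l2 < - M" for l1 l2
  proof -
    have "B \<notin> R l1 l2" for B
    proof
      assume "B \<in> R l1 l2"
      then have B: "B \<in> stone_spectrum" "Re (f B) \<le> l1" "Im (f B) \<le> l2" unfolding R_def by blast+
      have "\<bar>Re (f B)\<bar> \<le> M" "\<bar>Im (f B)\<bar> \<le> M"
        using M B(1) abs_Re_le_cmod[of "f B"] abs_Im_le_cmod[of "f B"] by auto
      then show False using B that by linarith
    qed
    then show ?thesis by blast
  qed
  have Rfull: "R l1 l2 = stone_spectrum" if "M \<le> l1" "M \<le> l2" for l1 l2
  proof -
    have "B \<in> R l1 l2" if B: "B \<in> stone_spectrum" for B
    proof -
      have "\<bar>Re (f B)\<bar> \<le> M" "\<bar>Im (f B)\<bar> \<le> M"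
        using M B abs_Re_le_cmod[of "f B"] abs_Im_le_cmod[of "f B"] by auto
      then have "Re (f B) \<le> l1" "Im (f B) \<le> l2" using \<open>M \<le> l1\<close> \<open>M \<le> l2\<close> by linarith+
      then show ?thesis using B unfolding R_def by blast
    qed
    then show ?thesis unfolding R_def by blast
  qed
  have Ebot: "E l1 l2 = bot" if "R l1 l2 = {}" for l1 l2
    using EP[of l1 l2] that QQ_empty by blast
  have Etop: "E l1 l2 = top" if "R l1 l2 = stone_spectrum" for l1 l2
  proof -
    have "QQ top \<subseteq> R l1 l2" using that by blast
    then have "top \<le> E l1 l2" using Ele by blast
    then show ?thesis by (simp add: top_unique)
  qed
  have Rdens: "B \<in> R l1 l2" if B: "B \<in> stone_spectrum"
    and H: "\<And>m1 m2. m1 \<in> \<rat> \<Longrightarrow> m2 \<in> \<rat> \<Longrightarrow> l1 < m1 \<Longrightarrow> l2 < m2 \<Longrightarrow> B \<in> R m1 m2" for B l1 l2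
  proof -
    obtain r1 where r1: "r1 \<in> \<rat>" "l1 < r1" using rat_above by blast
    obtain r2 where r2: "r2 \<in> \<rat>" "l2 < r2" using rat_above by blast
    have "Re (f B) \<le> l1"
    proof (rule dens_rat)
      fix m assume "m \<in> \<rat>" "l1 < m"
      then have "B \<in> R m r2" using H r2 by blast
      then show "Re (f B) \<le> m" unfolding R_def by blast
    qed
    moreover have "Im (f B) \<le> l2"
    proof (rule dens_rat)
      fix m assume "m \<in> \<rat>" "l2 < m"
      then have "B \<in> R r1 m" using H r1 by blast
      then show "Im (f B) \<le> m" unfolding R_def by blast
    qed
    ultimately show ?thesis using B unfolding R_def by blast
  qed
  have csf: "complex_spectral_family E"
    unfolding complex_spectral_family_def
  proof (intro conjI allI)
    fix l1 l2 m1 m2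
    have "inf (E l1 l2) (E m1 m2) \<le> E (min l1 m1) (min l2 m2)"
      unfolding Ele QQ_inf using EP[of l1 l2] EP[of m1 m2] Rint[of l1 l2 m1 m2] by blast
    moreover have "E (min l1 m1) (min l2 m2) \<le> E l1 l2" "E (min l1 m1) (min l2 m2) \<le> E m1 m2"
      unfolding Ele using EP[of "min l1 m1" "min l2 m2"] Rmono[of "min l1 m1" l1 "min l2 m2" l2]
        Rmono[of "min l1 m1" m1 "min l2 m2" m2] by auto
    ultimately show "inf (E l1 l2) (E m1 m2) = E (min l1 m1) (min l2 m2)"
      by (simp add: order.antisym)
  next
    fix l1 l2
    show "is_glb (E l1 l2) {E m1 m2 | m1 m2. m1 \<in> \<rat> \<and> m2 \<in> \<rat> \<and> l1 < m1 \<and> l2 < m2}"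
      unfolding is_glb_def
    proof (intro conjI ballI allI impI)
      fix s assume "s \<in> {E m1 m2 | m1 m2. m1 \<in> \<rat> \<and> m2 \<in> \<rat> \<and> l1 < m1 \<and> l2 < m2}"
      then obtain m1 m2 where m: "s = E m1 m2" "l1 < m1" "l2 < m2" by blast
      have "QQ (E l1 l2) \<subseteq> R m1 m2" using EP[of l1 l2] Rmono[of l1 m1 l2 m2] m by auto
      then show "E l1 l2 \<le> s" unfolding m(1) Ele .
    next
      fix y assume y: "\<forall>s\<in>{E m1 m2 | m1 m2. m1 \<in> \<rat> \<and> m2 \<in> \<rat> \<and> l1 < m1 \<and> l2 < m2}. y \<le> s"
      have "QQ y \<subseteq> R l1 l2"
      proof
        fix B assume B: "B \<in> QQ y"
        show "B \<in> R l1 l2"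
        proof (rule Rdens)
          show "B \<in> stone_spectrum" using B by blast
          fix m1 m2 assume "m1 \<in> \<rat>" "m2 \<in> \<rat>" "l1 < m1" "l2 < m2"
          then have "y \<le> E m1 m2" using y by blast
          then show "B \<in> R m1 m2" using B unfolding Ele by blast
        qed
      qed
      then show "y \<le> E l1 l2" unfolding Ele .
    qed
  next
    fix l2
    obtain r where r: "r \<in> \<rat>" "r < - M" using rat_below by blast
    have "E r l2 = bot" using Ebot Rempty r by blast
    have mem: "E r l2 \<in> {E l l2 | l. l \<in> \<rat>}" using r by blast
    show "is_glb bot {E l l2 | l. l \<in> \<rat>}" unfolding is_glb_def
    proof (intro conjI ballI allI impI)
      fix y assume "\<forall>s\<in>{E l l2 | l. l \<in> \<rat>}. y \<le> s"
      then have "y \<le> E r l2" using mem by blast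
      then show "y \<le> bot" using \<open>E r l2 = bot\<close> by simp
    qed simp
  next
    fix l1
    obtain r where r: "r \<in> \<rat>" "r < - M" using rat_below by blast
    have "E l1 r = bot" using Ebot Rempty r by blast
    have mem: "E l1 r \<in> {E l1 l | l. l \<in> \<rat>}" using r by blast
    show "is_glb bot {E l1 l | l. l \<in> \<rat>}" unfolding is_glb_def
    proof (intro conjI ballI allI impI)
      fix y assume "\<forall>s\<in>{E l1 l | l. l \<in> \<rat>}. y \<le> s"
      then have "y \<le> E l1 r" using mem by blast
      then show "y \<le> bot" using \<open>E l1 r = bot\<close> by simp
    qed simp
  next
    obtain r where r: "r \<in> \<rat>" "M < r" using rat_above by blast
    have "E r r = top" using Etop Rfull r by simp
    have mem: "E r r \<in> {E l1 l2 | l1 l2. l1 \<in> \<rat> \<and> l2 \<in> \<rat>}" using r by blast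
    show "is_lub top {E l1 l2 | l1 l2. l1 \<in> \<rat> \<and> l2 \<in> \<rat>}" unfolding is_lub_def
    proof (intro conjI ballI allI impI)
      fix z assume "\<forall>s\<in>{E l1 l2 | l1 l2. l1 \<in> \<rat> \<and> l2 \<in> \<rat>}. s \<le> z"
      then have "E r r \<le> z" using mem by blast
      then show "top \<le> z" using \<open>E r r = top\<close> by simp
    qed simp
  qed
  have bd: "\<forall>l1 l2. (l1 \<le> - M - 1 \<or> l2 \<le> - M - 1) \<longrightarrow> E l1 l2 = bot"
  proof (intro allI impI)
    fix l1 l2 :: real assume "l1 \<le> - M - 1 \<or> l2 \<le> - M - 1"
    then have "l1 < - M \<or> l2 < - M" by linarith
    then show "E l1 l2 = bot" using Ebot Rempty by blast
  qed
  have bt: "\<forall>l1 l2. (M \<le> l1 \<and> M \<le> l2) \<longrightarrow> E l1 l2 = top"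
    using Etop Rfull by blast
  have ES: "E \<in> S_b" unfolding S_b_def bounded_csf_def using csf bd bt by blast
  have "f_E E B = f B" for B
  proof (cases "B \<in> stone_spectrum")
    case False
    then show ?thesis using f0 by (simp add: f_E_def)
  next
    case B: True
    have EinB: "E l1 l2 \<in> B" if "Re (f B) < l1" "Im (f B) < l2" for l1 l2
    proof -
      have "open {z::complex. Re z < l1 \<and> Im z < l2}"
        by (intro open_Collect_conj open_Collect_less continuous_intros)
      then have "openin stone_topology {x \<in> topspace stone_topology. f x \<in> {z::complex. Re z < l1 \<and> Im z < l2}}"
        using openin_continuous_map_preimage[OF cf, of "{z::complex. Re z < l1 \<and> Im z < l2}"] by simp
      then have o: "openin stone_topology {x \<in> stone_spectrum. Re (f x) < l1 \<and> Im (f x) < l2}"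
        by (simp add: topspace_stone)
      have "B \<in> {x \<in> stone_spectrum. Re (f x) < l1 \<and> Im (f x) < l2}" using B that by blast
      moreover have "\<forall>B\<in>{x \<in> stone_spectrum. Re (f x) < l1 \<and> Im (f x) < l2}. \<exists>a\<in>B. QQ a \<subseteq> {x \<in> stone_spectrum. Re (f x) < l1 \<and> Im (f x) < l2}"
        using o unfolding openin_stone by (rule conjunct2)
      ultimately have "\<exists>a\<in>B. QQ a \<subseteq> {x \<in> stone_spectrum. Re (f x) < l1 \<and> Im (f x) < l2}"
        by (rule bspec[rotated])
      then obtain a where a: "a \<in> B" "QQ a \<subseteq> {x \<in> stone_spectrum. Re (f x) < l1 \<and> Im (f x) < l2}"
        by blast
      have "{x \<in> stone_spectrum. Re (f x) < l1 \<and> Im (f x) < l2} \<subseteq> R l1 l2" unfolding R_def by auto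
      then have "QQ a \<subseteq> R l1 l2" using a(2) by (rule subset_trans[rotated])
      then have "a \<le> E l1 l2" unfolding Ele .
      then show ?thesis using a(1) B spec_up by blast
    qed
    have BR: "Re (f B) \<le> l1 \<and> Im (f B) \<le> l2" if "E l1 l2 \<in> B" for l1 l2
    proof -
      have "B \<in> QQ (E l1 l2)" using that B by blast
      then have "B \<in> R l1 l2" using conjunct1[OF EP[of l1 l2]] by (rule subsetD[rotated])
      then show ?thesis unfolding R_def by blast
    qed
    have le1: "f_E1 E B \<le> Re (f B)"
    proof (rule dense_ge)
      fix l assume "Re (f B) < l"
      then have "E l (Im (f B) + 1) \<in> B" using EinB by simp
      then show "f_E1 E B \<le> l" using Sb_char(1)[OF ES B] by blast
    qed
    have le2: "f_E2 E B \<le> Im (f B)"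
    proof (rule dense_ge)
      fix l assume "Im (f B) < l"
      then have "E (Re (f B) + 1) l \<in> B" using EinB by simp
      then show "f_E2 E B \<le> l" using Sb_char(1)[OF ES B] by blast
    qed
    have ge1: "Re (f B) \<le> f_E1 E B"
    proof (rule ccontr)
      assume nt: "\<not> ?thesis"
      then obtain t where t: "f_E1 E B < t" "t < Re (f B)" using dense not_le by blast
      have "f_E2 E B < f_E2 E B + 1" by simp
      then have "E t (f_E2 E B + 1) \<in> B" using Sb_char(2)[OF ES B] t by blast
      then have "Re (f B) \<le> t" using BR by blast
      then show False using t by linarith
    qed
    have ge2: "Im (f B) \<le> f_E2 E B"
    proof (rule ccontr)
      assume nt: "\<not> ?thesis"
      then obtain t where t: "f_E2 E B < t" "t < Im (f B)" using dense not_le by blast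
      have "f_E1 E B < f_E1 E B + 1" by simp
      then have "E (f_E1 E B + 1) t \<in> B" using Sb_char(2)[OF ES B] t by blast
      then have "Im (f B) \<le> t" using BR by blast
      then show False using t by linarith
    qed
    have "f_E1 E B = Re (f B)" "f_E2 E B = Im (f B)" using le1 le2 ge1 ge2 by linarith+
    then show ?thesis using B by (simp add: f_E_def complex_eq_iff)
  qed
  then have "f_E E = f" by (rule ext)
  then show ?thesis using ES by blast
qed

theorem theorem2p23:
  assumes "sigma_complete TYPE('a::boolean_algebra)"
  shows "bij_betw (f_E :: (real \<Rightarrow> real \<Rightarrow> 'a) \<Rightarrow> 'a set \<Rightarrow> complex) S_b C_Q"
  unfolding bij_betw_def
proof
  show "inj_on (f_E :: (real \<Rightarrow> real \<Rightarrow> 'a) \<Rightarrow> 'a set \<Rightarrow> complex) S_b" by (rule fE_inj)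
  show "(f_E :: (real \<Rightarrow> real \<Rightarrow> 'a) \<Rightarrow> 'a set \<Rightarrow> complex) ` S_b = C_Q"
  proof
    show "(f_E :: (real \<Rightarrow> real \<Rightarrow> 'a) \<Rightarrow> 'a set \<Rightarrow> complex) ` S_b \<subseteq> C_Q" using fE_in_CQ by blast
    show "C_Q \<subseteq> (f_E :: (real \<Rightarrow> real \<Rightarrow> 'a) \<Rightarrow> 'a set \<Rightarrow> complex) ` S_b"
    proof
      fix f :: "'a set \<Rightarrow> complex" assume "f \<in> C_Q"
      then obtain E where "E \<in> S_b" "f_E E = f" using surj_part[OF assms] by blast
      then show "f \<in> f_E ` S_b" by blast
    qed
  qed
qed

end
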